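(* If $S(A)=(a_n)$ is a regular Stanley sequence, then there is a unique choice of constants $\lambda,\sigma$ and independent Stanley sequence $(a'_n)$ such that $(a'_n)$ has character $\lambda$ and, for all sufficiently large $k$ and all $0\le i<2^k$, $a_{2^k-\sigma+i}=a_{2^k-\sigma}+a'_i$ and $a_{2^k-\sigma}=2a_{2^k-\sigma-1}-\lambda+1$.
   Context: A set of non-negative integers is 3-free if no three of its elements form an arithmetic progression. For a finite 3-free set $A=\{a_0<\cdots<a_k\}$ of non-negative integers, the Stanley sequence $S(A)=(a_n)_{n\ge0}$ is the increasing sequence with initial terms $a_0,\ldots,a_k$ in which each subsequent $a_{n+1}$ is the smallest integer greater than $a_n$ such that $\{a_0,\ldots,a_{n+1}\}$ is 3-free. Throughout, Stanley sequences are in root position ($a_0=0$). A Stanley sequence $(a_n)$ is independent with character $\lambda$ if for all sufficiently large $k$: $a_{2^k+i}=a_{2^k}+a_i$ for $0\le i<2^k$, and $a_{2^k}=2a_{2^k-1}-\lambda+1$ (the constant $\lambda$ is then unique). A Stanley sequence $(a_n)$ is regular if there exist constants $\lambda,\sigma$ and an independent Stanley sequence $(a'_n)$ of character $\lambda$ such that for all large $k$ and $0\le i<2^k$: $a_{2^k-\sigma+i}=a_{2^k-\sigma}+a'_i$ and $a_{2^k-\sigma}=2a_{2^k-\sigma-1}-\lambda+1$. *)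

theory Defs
  imports Main
begin

definition three_free :: "nat set \<Rightarrow> bool" where
  "three_free S \<longleftrightarrow> (\<forall>x\<in>S. \<forall>y\<in>S. \<forall>z\<in>S. x < y \<and> y < z \<longrightarrow> x + z \<noteq> 2 * y)"

definition stanley_of :: "nat set \<Rightarrow> (nat \<Rightarrow> nat) \<Rightarrow> bool" where
  "stanley_of A a \<longleftrightarrow>
     (\<forall>n < card A. a n = sorted_list_of_set A ! n) \<and>
     (\<forall>n \<ge> card A. a n = (LEAST m. a (n - 1) < m \<and> three_free (insert m (a ` {..<n}))))"

definition is_stanley :: "(nat \<Rightarrow> nat) \<Rightarrow> bool" where
  "is_stanley a \<longleftrightarrow> (\<exists>A. finite A \<and> three_free A \<and> 0 \<in> A \<and> stanley_of A a)"

definition indep_char :: "(nat \<Rightarrow> nat) \<Rightarrow> int \<Rightarrow> bool" where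
  "indep_char a lam \<longleftrightarrow> (\<exists>K. \<forall>k\<ge>K.
     (\<forall>i < 2^k. a (2^k + i) = a (2^k) + a i) \<and>
     int (a (2^k)) = 2 * int (a (2^k - 1)) - lam + 1)"

definition independent_stanley :: "(nat \<Rightarrow> nat) \<Rightarrow> bool" where
  "independent_stanley a \<longleftrightarrow> is_stanley a \<and> (\<exists>lam. indep_char a lam)"

text \<open>The regularity condition for given constants lam, sigma and sequence a'.
  Indices 2^k - sigma + i are integers; for large k they are nonnegative.\<close>
definition regular_data :: "(nat \<Rightarrow> nat) \<Rightarrow> int \<Rightarrow> int \<Rightarrow> (nat \<Rightarrow> nat) \<Rightarrow> bool" where
  "regular_data a lam sigma a' \<longleftrightarrow>
     is_stanley a' \<and> indep_char a' lam \<and>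
     (\<exists>K. \<forall>k\<ge>K. 2^k - sigma - 1 \<ge> 0 \<and>
        (\<forall>i::nat < 2^k. a (nat (2^k - sigma + int i)) = a (nat (2^k - sigma)) + a' i) \<and>
        int (a (nat (2^k - sigma))) = 2 * int (a (nat (2^k - sigma - 1))) - lam + 1)"

definition regular_stanley :: "(nat \<Rightarrow> nat) \<Rightarrow> bool" where
  "regular_stanley a \<longleftrightarrow> is_stanley a \<and> (\<exists>lam sigma a'. regular_data a lam sigma a')"

end

theory Submission
  imports Defs
begin

lemma three_free_subset: "three_free B \<Longrightarrow> A \<subseteq> B \<Longrightarrow> three_free A"
  unfolding three_free_def by blast

lemma three_free_insert_big:
  assumes "three_free S" "\<forall>x\<in>S. 2*x < m"
  shows "three_free (insert m S)"
  unfolding three_free_def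
proof (intro ballI impI)
  fix x y z assume xs: "x \<in> insert m S" "y \<in> insert m S" "z \<in> insert m S"
    and o: "x < y \<and> y < z"
  show "x + z \<noteq> 2 * y"
  proof (cases "z = m")
    case True
    then have "y \<in> S" using xs o by auto
    then show ?thesis using assms True by fastforce
  next
    case False
    then have zS: "z \<in> S" using xs by auto
    then have "z < m" using assms by fastforce
    then have "x \<in> S" "y \<in> S" using xs o by auto
    then show ?thesis using assms(1) zS o unfolding three_free_def by blast
  qed
qed

lemma stanley_step:
  assumes st: "stanley_of A a" and n: "n \<ge> card A" "n \<ge> 1"
    and tf: "three_free (a ` {..<n})"
  shows "a (n - 1) < a n \<and> three_free (a ` {..<Suc n})"
proof -
  let ?S = "a ` {..<n}"
  define M where "M = Max ?S"
  have fin: "finite ?S" by simp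
  have ne: "a (n-1) \<in> ?S" using n by auto
  have le: "\<forall>x\<in>?S. x \<le> M" using fin M_def by auto
  have ex: "\<exists>m. a (n - 1) < m \<and> three_free (insert m ?S)"
  proof (intro exI conjI)
    have "a (n-1) \<le> M" using le ne by blast
    then show "a (n-1) < 2*M+1" by simp
    show "three_free (insert (2*M+1) ?S)"
      by (rule three_free_insert_big[OF tf]) (use le in \<open>fastforce simp: Ball_def\<close>)
  qed
  have an: "a n = (LEAST m. a (n - 1) < m \<and> three_free (insert m ?S))"
    using st n unfolding stanley_of_def by blast
  have "a (n - 1) < a n \<and> three_free (insert (a n) ?S)"
    unfolding an by (rule LeastI_ex[OF ex])
  moreover have "a ` {..<Suc n} = insert (a n) ?S" by (simp add: lessThan_Suc)
  ultimately show ?thesis by simp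
qed

lemma stanley_strict_mono:
  assumes st: "stanley_of A a" and fA: "finite A" and tA: "three_free A" and z: "0 \<in> A"
  shows "strict_mono a"
proof -
  have cA: "card A \<ge> 1" using fA z by (metis One_nat_def Suc_leI card_gt_0_iff empty_iff)
  have small: "a n = sorted_list_of_set A ! n" if "n < card A" for n
    using st that unfolding stanley_of_def by blast
  have sub: "a ` {..<n} \<subseteq> A" if "n \<le> card A" for n
  proof
    fix x assume "x \<in> a ` {..<n}"
    then obtain i where i: "i < n" "x = a i" by auto
    then have "i < length (sorted_list_of_set A)" using that by simp
    then have "sorted_list_of_set A ! i \<in> set (sorted_list_of_set A)" by (rule nth_mem)
    then show "x \<in> A" using i small that fA by simp
  qed
  have tf: "three_free (a ` {..<n})" for n
  proof (induction n)
    case 0 then show ?case by (simp add: three_free_def)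
  next
    case (Suc n)
    show ?case
    proof (cases "Suc n \<le> card A")
      case True then show ?thesis using three_free_subset[OF tA sub] by blast
    next
      case False
      then show ?thesis using stanley_step[OF st _ _ Suc.IH] cA by simp
    qed
  qed
  have "a n < a (Suc n)" for n
  proof (cases "Suc n < card A")
    case True
    have ss: "sorted_wrt (<) (sorted_list_of_set A)" by simp
    have "sorted_list_of_set A ! n < sorted_list_of_set A ! Suc n"
      using sorted_wrt_nth_less[OF ss, of n "Suc n"] True fA by simp
    then show ?thesis using small True by simp
  next
    case False
    then show ?thesis using stanley_step[OF st _ _ tf[of "Suc n"]] by simp
  qed
  then show ?thesis by (simp add: strict_mono_Suc_iff)
qed

lemma is_stanley_mono: "is_stanley a \<Longrightarrow> strict_mono a"
  unfolding is_stanley_def using stanley_strict_mono by blast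

lemma sigma_not_lt:
  assumes r1: "regular_data a l1 s1 b1" and r2: "regular_data a l2 s2 b2"
    and sm: "strict_mono a" and lt: "s1 < s2"
  shows False
proof -
  obtain K1 where K1: "\<forall>k\<ge>K1. 2^k - s1 - 1 \<ge> 0 \<and>
        (\<forall>i::nat < 2^k. a (nat (2^k - s1 + int i)) = a (nat (2^k - s1)) + b1 i) \<and>
        int (a (nat (2^k - s1))) = 2 * int (a (nat (2^k - s1 - 1))) - l1 + 1"
    using r1 unfolding regular_data_def by blast
  obtain K2 where K2: "\<forall>k\<ge>K2. 2^k - s2 - 1 \<ge> 0 \<and>
        (\<forall>i::nat < 2^k. a (nat (2^k - s2 + int i)) = a (nat (2^k - s2)) + b2 i) \<and>
        int (a (nat (2^k - s2))) = 2 * int (a (nat (2^k - s2 - 1))) - l2 + 1"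
    using r2 unfolding regular_data_def by blast
  define d where "d = nat (s2 - s1)"
  have dpos: "d \<ge> 1" and dint: "int d = s2 - s1" using lt d_def by auto
  define K0 where "K0 = max K1 K2 + d"
  define c where "c = int (b2 d) - 2 * int (b2 (d-1)) + l1 - 1"
  have key: "int (a (nat (2^k - s2))) = c" if k: "k \<ge> K0" for k
  proof -
    have "d < 2^d" by (rule less_exp)
    also have "(2::nat)^d \<le> 2^k" using k K0_def by (intro power_increasing) auto
    finally have dk: "d < 2^k" .
    have h1: "a (nat (2^k - s2 + int d)) = a (nat (2^k - s2)) + b2 d"
      using K2 k dk K0_def by auto
    have h2: "a (nat (2^k - s2 + int (d-1))) = a (nat (2^k - s2)) + b2 (d-1)"
      using K2 k dk K0_def by auto
    have h3: "int (a (nat (2^k - s1))) = 2 * int (a (nat (2^k - s1 - 1))) - l1 + 1"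
      using K1 k K0_def by auto
    have e1: "2^k - s2 + int d = 2^k - s1" using dint by simp
    have e2: "2^k - s2 + int (d-1) = 2^k - s1 - 1" using dint dpos by (simp add: of_nat_diff)
    show ?thesis using h1 h2 h3 unfolding e1 e2 c_def by simp
  qed
  have ge: "2^K0 - s2 - 1 \<ge> 0" using K2 K0_def by auto
  have "nat (2^K0 - s2) < nat (2^Suc K0 - s2)" proof -
    have p: "(0::int) < 2^K0" by simp
    have q: "(2::int)^Suc K0 = 2 * 2^K0" by simp
    have "2^K0 - s2 < 2^Suc K0 - s2" unfolding q using p by linarith
    then show ?thesis using ge by linarith
  qed
  then have "a (nat (2^K0 - s2)) < a (nat (2^Suc K0 - s2))" using sm by (simp add: strict_mono_def)
  moreover have "int (a (nat (2^K0 - s2))) = int (a (nat (2^Suc K0 - s2)))"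
    using key[of K0] key[of "Suc K0"] by simp
  ultimately show False by simp
qed

lemma regular_unique:
  assumes r1: "regular_data a l1 s1 b1" and r2: "regular_data a l2 s2 b2"
    and sm: "strict_mono a"
  shows "l1 = l2 \<and> s1 = s2 \<and> b1 = b2"
proof -
  have s: "s1 = s2" using sigma_not_lt[OF r1 r2 sm] sigma_not_lt[OF r2 r1 sm] by (metis linorder_neqE)
  obtain K1 where K1: "\<forall>k\<ge>K1. 2^k - s1 - 1 \<ge> 0 \<and>
        (\<forall>i::nat < 2^k. a (nat (2^k - s1 + int i)) = a (nat (2^k - s1)) + b1 i) \<and>
        int (a (nat (2^k - s1))) = 2 * int (a (nat (2^k - s1 - 1))) - l1 + 1"
    using r1 unfolding regular_data_def by blast
  obtain K2 where K2: "\<forall>k\<ge>K2. 2^k - s1 - 1 \<ge> 0 \<and>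
        (\<forall>i::nat < 2^k. a (nat (2^k - s1 + int i)) = a (nat (2^k - s1)) + b2 i) \<and>
        int (a (nat (2^k - s1))) = 2 * int (a (nat (2^k - s1 - 1))) - l2 + 1"
    using r2 s unfolding regular_data_def by blast
  have l: "l1 = l2"
  proof -
    have "int (a (nat (2^(max K1 K2) - s1))) = 2 * int (a (nat (2^(max K1 K2) - s1 - 1))) - l1 + 1"
      using K1 by simp
    moreover have "int (a (nat (2^(max K1 K2) - s1))) = 2 * int (a (nat (2^(max K1 K2) - s1 - 1))) - l2 + 1"
      using K2 by simp
    ultimately show ?thesis by simp
  qed
  have "b1 i = b2 i" for i
  proof -
    define k where "k = max (max K1 K2) i"
    have "i < 2^i" by (rule less_exp)
    also have "(2::nat)^i \<le> 2^k" using k_def by (intro power_increasing) auto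
    finally have ik: "i < 2^k" .
    have "a (nat (2^k - s1 + int i)) = a (nat (2^k - s1)) + b1 i" using K1 k_def ik by simp
    moreover have "a (nat (2^k - s1 + int i)) = a (nat (2^k - s1)) + b2 i" using K2 k_def ik by simp
    ultimately show ?thesis by simp
  qed
  then show ?thesis using s l by auto
qed

theorem mainTheorem7:
  fixes a :: "nat \<Rightarrow> nat"
  assumes "regular_stanley a"
  shows "\<exists>!(lam, sigma, a'). regular_data a lam sigma a'"
proof -
  obtain l s b where r: "regular_data a l s b" and st: "is_stanley a"
    using assms unfolding regular_stanley_def by blast
  have sm: "strict_mono a" using is_stanley_mono[OF st] .
  show ?thesis
  proof (rule ex1I[of _ "(l, s, b)"])
    show "case (l, s, b) of (lam, sigma, a') \<Rightarrow> regular_data a lam sigma a'" using r by simp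
  next
    fix y assume "case y of (lam, sigma, a') \<Rightarrow> regular_data a lam sigma a'"
    then obtain l' s' b' where y: "y = (l', s', b')" "regular_data a l' s' b'"
      by (cases y) auto
    show "y = (l, s, b)" using regular_unique[OF y(2) r sm] y(1) by simp
  qed
qed

end
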